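(* Let $X$ be a $q$-generic $n\times m$ matrix ($m\le n$) whose entries lie in a division ring containing $K_q$ in its center. Let $i_1,\dots,i_m\in[n]$ (not necessarily in increasing order and not necessarily distinct), and let $A$ be the $m\times m$ matrix whose $t$-th row is $(x_{i_t1},\dots,x_{i_tm})$. For $0\le k<m$ let $A^{(k)}$ denote the matrix obtained from $A$ by deleting its first $k$ rows and first $k$ columns. Then, whenever the quasideterminants on the right are defined, $$\det_qA=\big|A^{(0)}\big|_{11}\,\big|A^{(1)}\big|_{11}\,\big|A^{(2)}\big|_{11}\cdots\big|A^{(m-1)}\big|_{11},$$ where $|A^{(m-1)}|_{11}=x_{i_m m}$ (i.e. $\det_qA=|A|_{i_11}|A^{i_11}|_{i_22}|A^{i_1i_2,12}|_{i_33}\cdots a_{i_mm}$).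
   Context: $K_q$ is a field of characteristic $0$ with $q\neq0$ not a root of unity. An $n\times m$ matrix $X=(x_{ij})$ is $q$-generic if for all $i<j$, $k<l$: $x_{kj}x_{ki}=qx_{ki}x_{kj}$; $x_{jk}x_{ik}=qx_{ik}x_{jk}$; $x_{jk}x_{il}=x_{il}x_{jk}$; $x_{jl}x_{ik}=x_{ik}x_{jl}+(q-q^{-1})x_{il}x_{jk}$. For a square matrix $A=(a_{ij})$ of size $m$, $\det_qA=\sum_{\sigma\in S_m}(-q)^{-\ell(\sigma)}a_{1\sigma1}\cdots a_{m\sigma m}$, where $\ell(\sigma)$ is the number of inversions of $\sigma$. For a square matrix $B$, $B^{ij}$ is $B$ with row $i$ and column $j$ deleted, and the $(i,j)$-quasideterminant is $|B|_{ij}=b_{ij}-\xi(B^{ij})^{-1}\zeta$, with $\xi$ row $i$ of $B$ without its $j$-th entry and $\zeta$ column $j$ of $B$ without its $i$-th entry (defined when $B^{ij}$ is invertible). *)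

theory Defs
  imports Main "HOL-Combinatorics.Permutations"
begin

text \<open>Matrices are functions nat => nat => 'a, rows/columns indexed from 1.
  Entries live in a (possibly noncommutative) division ring 'a.\<close>

definition q_generic :: "'a::division_ring \<Rightarrow> nat \<Rightarrow> nat \<Rightarrow> (nat \<Rightarrow> nat \<Rightarrow> 'a) \<Rightarrow> bool" where
  "q_generic q n m x \<longleftrightarrow>
     (\<forall>k\<in>{1..n}. \<forall>i\<in>{1..m}. \<forall>j\<in>{1..m}. i < j \<longrightarrow> x k j * x k i = q * x k i * x k j) \<and>
     (\<forall>i\<in>{1..n}. \<forall>j\<in>{1..n}. \<forall>k\<in>{1..m}. i < j \<longrightarrow> x j k * x i k = q * x i k * x j k) \<and>
     (\<forall>i\<in>{1..n}. \<forall>j\<in>{1..n}. \<forall>k\<in>{1..m}. \<forall>l\<in>{1..m}. i < j \<longrightarrow> k < l \<longrightarrow>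
        x j k * x i l = x i l * x j k \<and>
        x j l * x i k = x i k * x j l + (q - inverse q) * x i l * x j k)"

definition inversions :: "(nat \<Rightarrow> nat) \<Rightarrow> nat \<Rightarrow> nat" where
  "inversions \<sigma> m = card {(i, j). i \<in> {1..m} \<and> j \<in> {1..m} \<and> i < j \<and> \<sigma> j < \<sigma> i}"

definition qdet_q :: "'a::division_ring \<Rightarrow> nat \<Rightarrow> (nat \<Rightarrow> nat \<Rightarrow> 'a) \<Rightarrow> 'a" where
  "qdet_q q m A = (\<Sum>\<sigma>\<in>{\<sigma>. \<sigma> permutes {1..m}}.
      inverse ((- q) ^ inversions \<sigma> m) * prod_list (map (\<lambda>t. A t (\<sigma> t)) [1..<m+1]))"

definition is_inverse_on :: "nat set \<Rightarrow> nat set \<Rightarrow> (nat \<Rightarrow> nat \<Rightarrow> 'a::division_ring) \<Rightarrow> (nat \<Rightarrow> nat \<Rightarrow> 'a) \<Rightarrow> bool" where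
  "is_inverse_on R C M N \<longleftrightarrow>
     (\<forall>r\<in>R. \<forall>r'\<in>R. (\<Sum>c\<in>C. M r c * N c r') = (if r = r' then 1 else 0)) \<and>
     (\<forall>c\<in>C. \<forall>c'\<in>C. (\<Sum>r\<in>R. N c r * M r c') = (if c = c' then 1 else 0))"

definition invertible_on :: "nat set \<Rightarrow> nat set \<Rightarrow> (nat \<Rightarrow> nat \<Rightarrow> 'a::division_ring) \<Rightarrow> bool" where
  "invertible_on R C M \<longleftrightarrow> (\<exists>N. is_inverse_on R C M N)"

definition inv_on :: "nat set \<Rightarrow> nat set \<Rightarrow> (nat \<Rightarrow> nat \<Rightarrow> 'a::division_ring) \<Rightarrow> (nat \<Rightarrow> nat \<Rightarrow> 'a)" where
  "inv_on R C M = (SOME N. is_inverse_on R C M N)"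

definition quasidet :: "nat set \<Rightarrow> nat set \<Rightarrow> (nat \<Rightarrow> nat \<Rightarrow> 'a::division_ring) \<Rightarrow> nat \<Rightarrow> nat \<Rightarrow> 'a" where
  "quasidet R C M i j = M i j -
     (\<Sum>c\<in>C - {j}. \<Sum>r\<in>R - {i}. M i c * inv_on (R - {i}) (C - {j}) M c r * M r j)"

definition quasidet_defined :: "nat set \<Rightarrow> nat set \<Rightarrow> (nat \<Rightarrow> nat \<Rightarrow> 'a::division_ring) \<Rightarrow> nat \<Rightarrow> nat \<Rightarrow> bool" where
  "quasidet_defined R C M i j \<longleftrightarrow> invertible_on (R - {i}) (C - {j}) M"

end

theory Submission
  imports Defs
begin

definition skp :: "nat \<Rightarrow> nat \<Rightarrow> nat" where
  "skp k j = (if j < k then j else Suc j)"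

definition unskp :: "nat \<Rightarrow> nat \<Rightarrow> nat" where
  "unskp k v = (if v < k then v else v - 1)"

definition Gq :: "'a::division_ring \<Rightarrow> (nat \<Rightarrow> nat \<Rightarrow> 'a) \<Rightarrow> (nat \<Rightarrow> nat) \<Rightarrow> (nat \<Rightarrow> nat) \<Rightarrow> nat \<Rightarrow> 'a" where
  "Gq q x r c p = (\<Sum>\<sigma>\<in>{\<sigma>. \<sigma> permutes {1..p}}.
      inverse ((- q) ^ inversions \<sigma> p) * prod_list (map (\<lambda>t. x (r t) (c (\<sigma> t))) [1..<p+1]))"

definition insp :: "nat \<Rightarrow> nat \<Rightarrow> (nat \<Rightarrow> nat) \<Rightarrow> nat \<Rightarrow> nat" where
  "insp p k \<tau> = (\<lambda>i. if i = 1 then k else if 2 \<le> i \<and> i \<le> Suc p then skp k (\<tau> (i-1)) else i)"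

lemma skp_less_iff: "skp k a < skp k b \<longleftrightarrow> a < b"
  by (auto simp: skp_def)

lemma skp_inj: "skp k a = skp k b \<longleftrightarrow> a = b"
  by (auto simp: skp_def)

lemma skp_neq: "skp k a \<noteq> k"
  by (auto simp: skp_def)

lemma skp_unskp: "v \<noteq> k \<Longrightarrow> skp k (unskp k v) = v"
  by (auto simp: skp_def unskp_def)

lemma insp_permutes:
  assumes k: "k \<in> {1..Suc p}" and t: "\<tau> permutes {1..p}"
  shows "insp p k \<tau> permutes {1..Suc p}"
proof -
  let ?s = "insp p k \<tau>"
  have img: "?s ` {1..Suc p} \<subseteq> {1..Suc p}"
  proof
    fix y assume "y \<in> ?s ` {1..Suc p}"
    then obtain i where i: "i \<in> {1..Suc p}" "y = ?s i" by auto
    show "y \<in> {1..Suc p}"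
    proof (cases "i = 1")
      case True then show ?thesis using i k by (simp add: insp_def)
    next
      case False
      then have "i - 1 \<in> {1..p}" using i by auto
      then have "\<tau> (i-1) \<in> {1..p}" using permutes_in_image[OF t] by auto
      then show ?thesis using i False by (auto simp: insp_def skp_def)
    qed
  qed
  have inj: "inj_on ?s {1..Suc p}"
  proof (rule inj_onI)
    fix i j assume i: "i \<in> {1..Suc p}" and j: "j \<in> {1..Suc p}" and e: "?s i = ?s j"
    show "i = j"
    proof (cases "i = 1"; cases "j = 1")
      assume "i \<noteq> 1" "j \<noteq> 1"
      then have "skp k (\<tau> (i-1)) = skp k (\<tau> (j-1))" using e i j by (auto simp: insp_def)
      then have "\<tau> (i-1) = \<tau> (j-1)" by (simp add: skp_inj)
      then have "i - 1 = j - 1" using permutes_inj[OF t] by (auto dest: injD)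
      then show ?thesis using i j by auto
    next
      assume "i = 1" "j \<noteq> 1"
      then have "k = skp k (\<tau> (j-1))" using e j by (auto simp: insp_def)
      then show ?thesis using skp_neq[of k "\<tau> (j-1)"] by simp
    next
      assume "i \<noteq> 1" "j = 1"
      then have "k = skp k (\<tau> (i-1))" using e i by (auto simp: insp_def)
      then show ?thesis using skp_neq[of k "\<tau> (i-1)"] by simp
    qed (simp)
  qed
  have "?s ` {1..Suc p} = {1..Suc p}"
    using endo_inj_surj[OF _ img inj] by simp
  then have "bij_betw ?s {1..Suc p} {1..Suc p}" using inj by (simp add: bij_betw_def)
  moreover have "\<forall>i. i \<notin> {1..Suc p} \<longrightarrow> ?s i = i" by (auto simp: insp_def)
  ultimately show ?thesis by (metis bij_imp_permutes)
qed

lemma insp_inj: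
  assumes "\<tau> permutes {1..p}" "\<tau>' permutes {1..p}" "insp p k \<tau> = insp p k' \<tau>'"
  shows "k = k' \<and> \<tau> = \<tau>'"
proof -
  have kk: "k = k'" using fun_cong[OF assms(3), of 1] by (simp add: insp_def)
  have "\<tau> t = \<tau>' t" for t
  proof (cases "t \<in> {1..p}")
    case True
    have "insp p k \<tau> (Suc t) = insp p k' \<tau>' (Suc t)" using assms(3) by simp
    then show ?thesis using True kk by (auto simp: insp_def skp_inj)
  next
    case False then show ?thesis using assms(1,2) by (simp add: permutes_not_in)
  qed
  then show ?thesis using kk by auto
qed

lemma insp_surj:
  assumes s: "\<sigma> permutes {1..Suc p}"
  shows "\<exists>k \<tau>. k \<in> {1..Suc p} \<and> \<tau> permutes {1..p} \<and> \<sigma> = insp p k \<tau>"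
proof -
  define k where "k = \<sigma> 1"
  define \<tau> where "\<tau> = (\<lambda>t. if t \<in> {1..p} then unskp k (\<sigma> (Suc t)) else t)"
  have k: "k \<in> {1..Suc p}" unfolding k_def using permutes_in_image[OF s] by auto
  have sv: "\<sigma> (Suc t) \<in> {1..Suc p} - {k}" if "t \<in> {1..p}" for t
  proof -
    have "\<sigma> (Suc t) \<in> {1..Suc p}" using permutes_in_image[OF s] that by auto
    moreover have "\<sigma> (Suc t) \<noteq> \<sigma> 1"
    proof
      assume "\<sigma> (Suc t) = \<sigma> 1"
      then have "Suc t = 1" using permutes_inj[OF s] by (auto dest: injD)
      then show False using that by auto
    qed
    ultimately show ?thesis by (auto simp: k_def)
  qed
  have img: "\<tau> ` {1..p} \<subseteq> {1..p}"
  proof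
    fix y assume "y \<in> \<tau> ` {1..p}"
    then obtain t where t: "t \<in> {1..p}" "y = \<tau> t" by auto
    show "y \<in> {1..p}" using sv[OF t(1)] t k by (auto simp: \<tau>_def unskp_def)
  qed
  have inj: "inj_on \<tau> {1..p}"
  proof (rule inj_onI)
    fix a b assume a: "a \<in> {1..p}" and b: "b \<in> {1..p}" and e: "\<tau> a = \<tau> b"
    have "skp k (\<tau> a) = skp k (\<tau> b)" using e by simp
    then have "\<sigma> (Suc a) = \<sigma> (Suc b)" using a b sv[OF a] sv[OF b] by (simp add: \<tau>_def skp_unskp)
    then show "a = b" using permutes_inj[OF s] by (auto dest: injD)
  qed
  have "\<tau> ` {1..p} = {1..p}" using endo_inj_surj[OF _ img inj] by simp
  then have "bij_betw \<tau> {1..p} {1..p}" using inj by (simp add: bij_betw_def)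
  moreover have "\<forall>i. i \<notin> {1..p} \<longrightarrow> \<tau> i = i" by (auto simp: \<tau>_def)
  ultimately have tp: "\<tau> permutes {1..p}" by (metis bij_imp_permutes)
  have "\<sigma> = insp p k \<tau>"
  proof
    fix i
    show "\<sigma> i = insp p k \<tau> i"
    proof (cases "i = 1")
      case True then show ?thesis by (simp add: insp_def k_def)
    next
      case False
      show ?thesis
      proof (cases "2 \<le> i \<and> i \<le> Suc p")
        case True
        then have t: "i - 1 \<in> {1..p}" by auto
        have "Suc (i-1) = i" using True by auto
        then show ?thesis using True False sv[OF t] t by (simp add: insp_def \<tau>_def skp_unskp)
      next
        case F2: False
        then have "i \<notin> {1..Suc p}" using False by auto
        have "insp p k \<tau> i = i" using F2 False unfolding insp_def by auto
        then show ?thesis using \<open>i \<notin> {1..Suc p}\<close> permutes_not_in[OF s] by simp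
      qed
    qed
  qed
  then show ?thesis using k tp by blast
qed

lemma insp_inversions:
  assumes k: "k \<in> {1..Suc p}" and t: "\<tau> permutes {1..p}"
  shows "inversions (insp p k \<tau>) (Suc p) = (k-1) + inversions \<tau> p"
proof -
  let ?s = "insp p k \<tau>"
  define S where "S = {(i, j). i \<in> {1..Suc p} \<and> j \<in> {1..Suc p} \<and> i < j \<and> ?s j < ?s i}"
  define T where "T = {(i, j). i \<in> {1..p} \<and> j \<in> {1..p} \<and> i < j \<and> \<tau> j < \<tau> i}"
  define J where "J = {t \<in> {1..p}. \<tau> t < k}"
  define S1 where "S1 = (\<lambda>j. (1::nat, j)) ` (Suc ` J)"
  define S2 where "S2 = (\<lambda>(i, j). (Suc i, Suc j)) ` T"
  have SU: "S = S1 \<union> S2"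
  proof (rule set_eqI)
    fix z :: "nat \<times> nat"
    obtain i j where z: "z = (i, j)" by (cases z)
    show "z \<in> S \<longleftrightarrow> z \<in> S1 \<union> S2"
    proof (cases "i = 1")
      case True
      have "z \<in> S \<longleftrightarrow> (j \<in> {2..Suc p} \<and> skp k (\<tau> (j-1)) < k)"
        using True by (auto simp: S_def z insp_def)
      also have "\<dots> \<longleftrightarrow> (j \<in> {2..Suc p} \<and> \<tau> (j-1) < k)" by (auto simp: skp_def)
      also have "\<dots> \<longleftrightarrow> z \<in> S1 \<union> S2"
      proof
        assume a: "j \<in> {2..Suc p} \<and> \<tau> (j-1) < k"
        then have "j - 1 \<in> J" "j = Suc (j-1)" by (auto simp: J_def)
        then show "z \<in> S1 \<union> S2" using True by (metis S1_def UnI1 image_eqI z)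
      next
        assume "z \<in> S1 \<union> S2"
        then have "z \<in> S1" using True by (auto simp: S2_def T_def z)
        then show "j \<in> {2..Suc p} \<and> \<tau> (j-1) < k" by (auto simp: S1_def J_def z)
      qed
      finally show ?thesis .
    next
      case False
      have "z \<in> S \<longleftrightarrow> (i \<in> {2..Suc p} \<and> j \<in> {2..Suc p} \<and> i < j \<and> skp k (\<tau> (j-1)) < skp k (\<tau> (i-1)))"
        using False by (auto simp: S_def z insp_def)
      also have "\<dots> \<longleftrightarrow> (i \<in> {2..Suc p} \<and> j \<in> {2..Suc p} \<and> i < j \<and> \<tau> (j-1) < \<tau> (i-1))"
        by (simp add: skp_less_iff)
      also have "\<dots> \<longleftrightarrow> z \<in> S1 \<union> S2"
        using False apply (simp add: z S1_def S2_def T_def image_iff)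
        apply (rule iffI)
         apply (rule exI[where x="i-1"])
         apply (auto intro!: exI[where x="j-1"])
        done
      finally show ?thesis .
    qed
  qed
  have disj: "S1 \<inter> S2 = {}" by (auto simp: S1_def S2_def T_def)
  have fT: "finite T" by (rule finite_subset[of _ "{1..p} \<times> {1..p}"]) (auto simp: T_def)
  have fJ: "finite J" by (simp add: J_def)
  have fin: "finite S1" "finite S2" using fT fJ by (simp_all add: S1_def S2_def)
  have c2: "card S2 = card T"
    unfolding S2_def by (rule card_image) (auto simp: inj_on_def)
  have "\<tau> ` J = {v \<in> {1..p}. v < k}"
  proof (rule set_eqI, rule iffI)
    fix v assume "v \<in> \<tau> ` J" then show "v \<in> {v \<in> {1..p}. v < k}"
      using permutes_in_image[OF t] by (auto simp: J_def)
  next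
    fix v assume v: "v \<in> {v \<in> {1..p}. v < k}"
    then have "v \<in> \<tau> ` {1..p}" using permutes_image[OF t] by simp
    then obtain u where "u \<in> {1..p}" "v = \<tau> u" by auto
    then show "v \<in> \<tau> ` J" using v by (auto simp: J_def)
  qed
  moreover have "inj_on \<tau> J" using permutes_inj[OF t] by (auto simp: inj_on_def dest: injD)
  ultimately have "card J = card {v \<in> {1..p}. v < k}" by (metis card_image)
  also have "{v \<in> {1..p}. v < k} = {1..<k}" using k by auto
  finally have cJ: "card J = k - 1" by simp
  have "card S1 = card (Suc ` J)" unfolding S1_def by (rule card_image) (simp add: inj_on_def)
  also have "\<dots> = card J" by (rule card_image) simp
  finally have c1: "card S1 = k - 1" using cJ by simp
  have "card S = card S1 + card S2" unfolding SU using card_Un_disjoint[OF fin disj] .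
  then show ?thesis using c1 c2 by (simp add: inversions_def S_def T_def)
qed

lemma insp_prod:
  "prod_list (map (\<lambda>t. x (r t) (c (insp p k \<tau> t))) [1..<Suc p+1]) =
   x (r 1) (c k) * prod_list (map (\<lambda>t. x (r (Suc t)) (c (skp k (\<tau> t)))) [1..<p+1])"
proof -
  have e: "[1..<Suc p+1] = 1 # map Suc [1..<p+1]" by (simp add: upt_conv_Cons map_Suc_upt)
  have m:  "map (\<lambda>t. x (r (Suc t)) (c (insp p k \<tau> (Suc t)))) [1..<p+1] =
       map (\<lambda>t. x (r (Suc t)) (c (skp k (\<tau> t)))) [1..<p+1]"
    by (rule map_cong) (auto simp: insp_def)
  show ?thesis unfolding e list.map map_map prod_list.Cons comp_def m
    by (simp add: insp_def)
qed

lemma central_pow: fixes q :: "'a::ring_1" assumes "\<forall>y. q * y = y * q" shows "((-q) ^ k) * y = y * ((-q) ^ k)"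
proof (induction k)
  case (Suc k)
  have "(-q) * y = y * (-q)" using assms[rule_format, of y] by simp
  have "(-q) ^ Suc k * y = (-q) * ((-q) ^ k * y)" by (simp add: mult.assoc)
  also have "\<dots> = ((-q) * y) * (-q) ^ k" using Suc by (simp add: mult.assoc)
  also have "\<dots> = y * (-q) ^ Suc k" using \<open>(-q) * y = y * (-q)\<close> by (simp add: mult.assoc)
  finally show ?case .
qed simp

lemma central_inv: assumes "(a::'a::division_ring) * y = y * a" shows "inverse a * y = y * inverse a"
proof (cases "a = 0")
  case False
  have "inverse a * y = inverse a * (y * a) * inverse a" using False by (simp add: mult.assoc)
  also have "\<dots> = inverse a * (a * y) * inverse a" using assms by simp
  also have "\<dots> = y * inverse a" using False by (simp add: mult.assoc[symmetric])
  finally show ?thesis .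
qed simp

lemma central_ipow: assumes "\<forall>y. q * y = y * q"
  shows "inverse ((-q) ^ k) * y = y * inverse ((-q :: 'a::division_ring) ^ k)"
  by (rule central_inv[OF central_pow[OF assms]])

lemma ipow_add: assumes "\<forall>y. q * y = y * q" "q \<noteq> 0"
  shows "inverse ((-q :: 'a::division_ring) ^ (a + b)) = inverse ((-q) ^ a) * inverse ((-q) ^ b)"
proof -
  have nz: "(-q) ^ a \<noteq> 0" "(-q) ^ b \<noteq> 0" using assms(2) by auto
  have "inverse ((-q) ^ (a + b)) = inverse ((-q) ^ a * (-q) ^ b)" by (simp add: power_add)
  also have "\<dots> = inverse ((-q) ^ b) * inverse ((-q) ^ a)" using nonzero_inverse_mult_distrib[OF nz] .
  also have "\<dots> = inverse ((-q) ^ a) * inverse ((-q) ^ b)" by (rule central_ipow[OF assms(1)])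
  finally show ?thesis .
qed

lemma swap_mid: "(b::'a::semiring) * X = X * b \<Longrightarrow> a * b * (X * P) = a * (X * (b * P))"
  by (metis mult.assoc)

lemma laplace:
  assumes cq: "\<forall>y. q * y = y * q" and q0: "q \<noteq> 0"
  shows "Gq q x r c (Suc p) = (\<Sum>k=1..Suc p. inverse ((-q) ^ (k-1)) *
            (x (r 1) (c k) * Gq q x (\<lambda>t. r (Suc t)) (\<lambda>t. c (skp k t)) p))"
proof -
  let ?K = "{1..Suc p}" and ?T = "{\<tau>. \<tau> permutes {1..p}}"
  let ?h = "\<lambda>(k, \<tau>). insp p k \<tau>"
  let ?F = "\<lambda>\<sigma>. inverse ((- q) ^ inversions \<sigma> (Suc p)) * prod_list (map (\<lambda>t. x (r t) (c (\<sigma> t))) [1..<Suc p+1])"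
  have img: "{\<sigma>. \<sigma> permutes {1..Suc p}} = ?h ` (?K \<times> ?T)"
  proof
    show "{\<sigma>. \<sigma> permutes {1..Suc p}} \<subseteq> ?h ` (?K \<times> ?T)"
    proof
      fix \<sigma> assume "\<sigma> \<in> {\<sigma>. \<sigma> permutes {1..Suc p}}"
      then obtain k \<tau> where "k \<in> ?K" "\<tau> permutes {1..p}" "\<sigma> = insp p k \<tau>" using insp_surj by blast
      then show "\<sigma> \<in> ?h ` (?K \<times> ?T)" by force
    qed
  next
    show "?h ` (?K \<times> ?T) \<subseteq> {\<sigma>. \<sigma> permutes {1..Suc p}}" using insp_permutes by auto
  qed
  have inj: "inj_on ?h (?K \<times> ?T)"
  proof (rule inj_onI)
    fix a b assume "a \<in> ?K \<times> ?T" "b \<in> ?K \<times> ?T" "?h a = ?h b"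
    then show "a = b" using insp_inj[of "snd a" p "snd b" "fst a" "fst b"]
      by (cases a, cases b) simp
  qed
  have "Gq q x r c (Suc p) = sum ?F (?h ` (?K \<times> ?T))" unfolding Gq_def img[symmetric] by simp
  also have "\<dots> = sum (?F \<circ> ?h) (?K \<times> ?T)" by (rule sum.reindex[OF inj])
  also have "\<dots> = (\<Sum>k\<in>?K. \<Sum>\<tau>\<in>?T. ?F (insp p k \<tau>))"
    by (subst sum.cartesian_product) (simp add: case_prod_beta comp_def)
  also have "\<dots> = (\<Sum>k=1..Suc p. inverse ((-q) ^ (k-1)) *
            (x (r 1) (c k) * Gq q x (\<lambda>t. r (Suc t)) (\<lambda>t. c (skp k t)) p))"
  proof (rule sum.cong[OF refl])
    fix k assume k: "k \<in> ?K"
    have "?F (insp p k \<tau>) = inverse ((-q) ^ (k-1)) * (x (r 1) (c k) *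
          (inverse ((- q) ^ inversions \<tau> p) * prod_list (map (\<lambda>t. x (r (Suc t)) (c (skp k (\<tau> t)))) [1..<p+1])))"
      if t: "\<tau> \<in> ?T" for \<tau>
    proof -
      from t have tp: "\<tau> permutes {1..p}" by simp
      have "?F (insp p k \<tau>) = inverse ((-q) ^ ((k-1) + inversions \<tau> p)) *
          (x (r 1) (c k) * prod_list (map (\<lambda>t. x (r (Suc t)) (c (skp k (\<tau> t)))) [1..<p+1]))"
        by (simp only: insp_inversions[OF k tp] insp_prod)
      also have "\<dots> = inverse ((-q) ^ (k-1)) * inverse ((- q) ^ inversions \<tau> p) *
          (x (r 1) (c k) * prod_list (map (\<lambda>t. x (r (Suc t)) (c (skp k (\<tau> t)))) [1..<p+1]))"
        by (simp only: ipow_add[OF cq q0])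
      also have "\<dots> = inverse ((-q) ^ (k-1)) * (x (r 1) (c k) *
          (inverse ((- q) ^ inversions \<tau> p) * prod_list (map (\<lambda>t. x (r (Suc t)) (c (skp k (\<tau> t)))) [1..<p+1])))"
        by (rule swap_mid, rule central_ipow[OF cq])
      finally show ?thesis .
    qed
    then have "(\<Sum>\<tau>\<in>?T. ?F (insp p k \<tau>)) = (\<Sum>\<tau>\<in>?T. inverse ((-q) ^ (k-1)) * (x (r 1) (c k) *
          (inverse ((- q) ^ inversions \<tau> p) * prod_list (map (\<lambda>t. x (r (Suc t)) (c (skp k (\<tau> t)))) [1..<p+1]))))"
      by (rule sum.cong[OF refl])
    also have "\<dots> = inverse ((-q) ^ (k-1)) * (x (r 1) (c k) * Gq q x (\<lambda>t. r (Suc t)) (\<lambda>t. c (skp k t)) p)"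
      unfolding Gq_def by (simp add: sum_distrib_left)
    finally show "(\<Sum>\<tau>\<in>?T. ?F (insp p k \<tau>)) = inverse ((-q) ^ (k-1)) * (x (r 1) (c k) * Gq q x (\<lambda>t. r (Suc t)) (\<lambda>t. c (skp k t)) p)" .
  qed
  finally show ?thesis .
qed

lemma Gq_0: "Gq q x r c 0 = 1"
  by (simp add: Gq_def inversions_def)

lemma skp_skp: "u < v \<Longrightarrow> skp v (skp u t) = skp u (skp (v-1) t)"
  by (auto simp: skp_def)

lemma laplace2:
  assumes cq: "\<forall>y. q * y = y * q" and q0: "q \<noteq> 0"
  shows "Gq q x r c (Suc (Suc p)) = (\<Sum>u=1..Suc (Suc p). \<Sum>v\<in>{Suc u..Suc (Suc p)}.
     inverse ((-q) ^ ((u-1) + (v-2))) *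
     ((x (r 1) (c u) * x (r 2) (c v) - inverse q * (x (r 1) (c v) * x (r 2) (c u))) *
      Gq q x (\<lambda>t. r (Suc (Suc t))) (\<lambda>t. c (skp u (skp (v-1) t))) p))"
proof -
  define a where "a k = inverse ((-q) ^ (k-1))" for k
  define GR where "GR k l = Gq q x (\<lambda>t. r (Suc (Suc t))) (\<lambda>t. c (skp k (skp l t))) p" for k l
  define T where "T k l = a k * a l * (x (r 1) (c k) * x (r 2) (c (skp k l)) * GR k l)" for k l
  have aC: "a l * y = y * a l" for l y unfolding a_def by (rule central_ipow[OF cq])
  have "Gq q x r c (Suc (Suc p)) = (\<Sum>k=1..Suc (Suc p). a k * (x (r 1) (c k) *
      (\<Sum>l=1..Suc p. a l * (x (r 2) (c (skp k l)) * GR k l))))"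
  proof -
    have "Gq q x r c (Suc (Suc p)) = (\<Sum>k=1..Suc (Suc p). a k * (x (r 1) (c k) *
       Gq q x (\<lambda>t. r (Suc t)) (\<lambda>t. c (skp k t)) (Suc p)))"
      unfolding a_def by (rule laplace[OF cq q0])
    also have "\<dots> = (\<Sum>k=1..Suc (Suc p). a k * (x (r 1) (c k) *
      (\<Sum>l=1..Suc p. a l * (x (r 2) (c (skp k l)) * GR k l))))"
      unfolding laplace[OF cq q0, of x "\<lambda>t. r (Suc t)"] a_def GR_def
      by (simp only: One_nat_def numeral_2_eq_2)
    finally show ?thesis .
  qed
  also have "\<dots> = (\<Sum>k=1..Suc (Suc p). \<Sum>l=1..Suc p. T k l)"
  proof (rule sum.cong[OF refl])
    fix k
    have "a k * (x (r 1) (c k) * (\<Sum>l=1..Suc p. a l * (x (r 2) (c (skp k l)) * GR k l))) =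
          (\<Sum>l=1..Suc p. a k * (x (r 1) (c k) * (a l * (x (r 2) (c (skp k l)) * GR k l))))"
      by (simp only: sum_distrib_left)
    also have "\<dots> = (\<Sum>l=1..Suc p. T k l)"
    proof (rule sum.cong[OF refl])
      fix l
      have "x (r 1) (c k) * (a l * (x (r 2) (c (skp k l)) * GR k l)) =
            (x (r 1) (c k) * a l) * (x (r 2) (c (skp k l)) * GR k l)" by (simp add: mult.assoc)
      also have "\<dots> = (a l * x (r 1) (c k)) * (x (r 2) (c (skp k l)) * GR k l)" by (simp add: aC)
      finally show "a k * (x (r 1) (c k) * (a l * (x (r 2) (c (skp k l)) * GR k l))) = T k l"
        unfolding T_def by (simp add: mult.assoc)
    qed
    finally show "a k * (x (r 1) (c k) * (\<Sum>l=1..Suc p. a l * (x (r 2) (c (skp k l)) * GR k l))) =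
          (\<Sum>l=1..Suc p. T k l)" .
  qed
  also have "\<dots> = (\<Sum>k=1..Suc (Suc p). (\<Sum>l\<in>{l\<in>{1..Suc (Suc p)}. l < k}. T k l) + (\<Sum>l=k..Suc p. T k l))"
  proof (rule sum.cong[OF refl])
    fix k assume k: "k \<in> {1..Suc (Suc p)}"
    have "{1..Suc p} = {l\<in>{1..Suc (Suc p)}. l < k} \<union> {k..Suc p}" using k by auto
    moreover have "{l\<in>{1..Suc (Suc p)}. l < k} \<inter> {k..Suc p} = {}" by auto
    ultimately show "(\<Sum>l=1..Suc p. T k l) = (\<Sum>l\<in>{l\<in>{1..Suc (Suc p)}. l < k}. T k l) + (\<Sum>l=k..Suc p. T k l)"
      by (simp add: sum.union_disjoint)
  qed
  also have "\<dots> = (\<Sum>k=1..Suc (Suc p). \<Sum>l\<in>{l\<in>{1..Suc (Suc p)}. l < k}. T k l) +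
                   (\<Sum>k=1..Suc (Suc p). \<Sum>l=k..Suc p. T k l)"
    by (simp add: sum.distrib)
  also have "(\<Sum>k=1..Suc (Suc p). \<Sum>l\<in>{l\<in>{1..Suc (Suc p)}. l < k}. T k l) =
             (\<Sum>u=1..Suc (Suc p). \<Sum>v\<in>{Suc u..Suc (Suc p)}. T v u)"
  proof -
    have "(\<Sum>k=1..Suc (Suc p). \<Sum>l\<in>{l\<in>{1..Suc (Suc p)}. l < k}. T k l) =
          (\<Sum>l=1..Suc (Suc p). \<Sum>k\<in>{k\<in>{1..Suc (Suc p)}. l < k}. T k l)"
      by (rule sum.swap_restrict) auto
    also have "\<dots> = (\<Sum>u=1..Suc (Suc p). \<Sum>v\<in>{Suc u..Suc (Suc p)}. T v u)"
    proof (rule sum.cong[OF refl])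
      fix l assume "l \<in> {1..Suc (Suc p)}"
      then have "{k\<in>{1..Suc (Suc p)}. l < k} = {Suc l..Suc (Suc p)}" by auto
      then show "(\<Sum>k\<in>{k\<in>{1..Suc (Suc p)}. l < k}. T k l) = (\<Sum>v\<in>{Suc l..Suc (Suc p)}. T v l)" by simp
    qed
    finally show ?thesis .
  qed
  also have "(\<Sum>k=1..Suc (Suc p). \<Sum>l=k..Suc p. T k l) =
             (\<Sum>u=1..Suc (Suc p). \<Sum>v\<in>{Suc u..Suc (Suc p)}. T u (v-1))"
    by (rule sum.cong[OF refl]) (simp only: sum.shift_bounds_cl_Suc_ivl diff_Suc_1)
  finally have E: "Gq q x r c (Suc (Suc p)) =
      (\<Sum>u=1..Suc (Suc p). \<Sum>v\<in>{Suc u..Suc (Suc p)}. T u (v-1) + T v u)"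
    by (simp add: sum.distrib add.commute)
  show ?thesis unfolding E
  proof (rule sum.cong[OF refl], rule sum.cong[OF refl])
    fix u v assume u: "u \<in> {1..Suc (Suc p)}" and v: "v \<in> {Suc u..Suc (Suc p)}"
    define e where "e = (u-1) + (v-2)"
    define X1 where "X1 = x (r 1) (c u) * x (r 2) (c v)"
    define X2 where "X2 = x (r 1) (c v) * x (r 2) (c u)"
    have g: "GR v u = GR u (v-1)" unfolding GR_def using v by (simp add: skp_skp)
    have s1: "skp u (v-1) = v" using v by (auto simp: skp_def)
    have s2: "skp v u = u" using v by (auto simp: skp_def)
    have c1: "a u * a (v-1) = inverse ((-q) ^ e)"
      unfolding a_def e_def using ipow_add[OF cq q0, of "u-1" "v-2"] v by (simp add: numeral_2_eq_2)
    have ee: "(u-1) + (v-1) = e + 1" unfolding e_def using u v by auto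
    have "a v * a u = a u * a v" by (rule aC)
    also have "a u * a v = inverse ((-q) ^ ((u-1) + (v-1)))"
      unfolding a_def by (rule ipow_add[symmetric, OF cq q0])
    also have "\<dots> = inverse ((-q) ^ (e + 1))" by (simp only: ee)
    also have "\<dots> = inverse ((-q) ^ e) * (- inverse q)"
      using ipow_add[OF cq q0, of e 1] by (simp add: inverse_minus_eq)
    finally have c2: "a v * a u = inverse ((-q) ^ e) * (- inverse q)" .
    have "T u (v-1) + T v u = inverse ((-q) ^ e) * (X1 * GR u (v-1)) +
           inverse ((-q) ^ e) * (- inverse q) * (X2 * GR u (v-1))"
      unfolding T_def c1 c2 g s1 s2 X1_def X2_def by simp
    also have "\<dots> = inverse ((-q) ^ e) * ((X1 - inverse q * X2) * GR u (v-1))"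
      by (simp add: algebra_simps)
    finally show "T u (v-1) + T v u = inverse ((-q) ^ ((u-1) + (v-2))) *
     ((x (r 1) (c u) * x (r 2) (c v) - inverse q * (x (r 1) (c v) * x (r 2) (c u))) *
      Gq q x (\<lambda>t. r (Suc (Suc t))) (\<lambda>t. c (skp u (skp (v-1) t))) p)"
      unfolding e_def X1_def X2_def GR_def .
  qed
qed

definition sw :: "nat \<Rightarrow> (nat \<Rightarrow> nat) \<Rightarrow> nat \<Rightarrow> nat" where
  "sw t r = (\<lambda>i. if i = t then r (Suc t) else if i = Suc t then r t else r i)"

definition okr :: "nat \<Rightarrow> (nat \<Rightarrow> nat) \<Rightarrow> nat \<Rightarrow> bool" where
  "okr n r p \<longleftrightarrow> (\<forall>t\<in>{1..p}. r t \<in> {1..n})"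

definition okc :: "nat \<Rightarrow> (nat \<Rightarrow> nat) \<Rightarrow> nat \<Rightarrow> bool" where
  "okc m c p \<longleftrightarrow> (\<forall>t\<in>{1..p}. c t \<in> {1..m}) \<and> (\<forall>s t. 1 \<le> s \<longrightarrow> s < t \<longrightarrow> t \<le> p \<longrightarrow> c s < c t)"

lemma M_same:
  fixes q :: "'a::division_ring"
  assumes gen: "q_generic q n m x" and q0: "q \<noteq> 0"
    and a: "a \<in> {1..n}" and u: "u \<in> {1..m}" and v: "v \<in> {1..m}" and uv: "u < v"
  shows "x a u * x a v - inverse q * (x a v * x a u) = 0"
proof -
  have g1: "\<forall>k\<in>{1..n}. \<forall>i\<in>{1..m}. \<forall>j\<in>{1..m}. i < j \<longrightarrow> x k j * x k i = q * x k i * x k j"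
    using gen unfolding q_generic_def by (elim conjE)
  have "x a v * x a u = q * x a u * x a v" using g1[rule_format, OF a u v uv] .
  then show ?thesis using q0 by (simp add: mult.assoc[symmetric])
qed

lemma M_swap:
  fixes q :: "'a::division_ring"
  assumes gen: "q_generic q n m x" and q0: "q \<noteq> 0"
    and a: "a \<in> {1..n}" and b: "b \<in> {1..n}" and ab: "a < b"
    and u: "u \<in> {1..m}" and v: "v \<in> {1..m}" and uv: "u < v"
  shows "x b u * x a v - inverse q * (x b v * x a u) =
         - inverse q * (x a u * x b v - inverse q * (x a v * x b u))"
proof -
  have r1: "x b u * x a v = x a v * x b u"
   and r2: "x b v * x a u = x a u * x b v + (q - inverse q) * x a v * x b u"
  proof -
    have g3: "\<forall>i\<in>{1..n}. \<forall>j\<in>{1..n}. \<forall>k\<in>{1..m}. \<forall>l\<in>{1..m}. i < j \<longrightarrow> k < l \<longrightarrow>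
        x j k * x i l = x i l * x j k \<and>
        x j l * x i k = x i k * x j l + (q - inverse q) * x i l * x j k"
      using gen unfolding q_generic_def by (elim conjE)
    from g3[rule_format, OF a b u v ab uv]
    show "x b u * x a v = x a v * x b u"
      and "x b v * x a u = x a u * x b v + (q - inverse q) * x a v * x b u" by auto
  qed
  have iq: "inverse q * (q * z) = z" for z using q0 by (simp add: mult.assoc[symmetric])
  show ?thesis unfolding r1 r2 by (simp add: algebra_simps iq)
qed

lemma okc_skp: "okc m c (Suc p) \<Longrightarrow> k \<in> {1..Suc p} \<Longrightarrow> okc m (\<lambda>t. c (skp k t)) p"
  unfolding okc_def
  apply (intro conjI allI impI ballI)
   apply (auto simp: skp_def)
  done

lemma okr_Suc: "okr n r (Suc p) \<Longrightarrow> okr n (\<lambda>t. r (Suc t)) p"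
  unfolding okr_def by auto

lemma pull_c:
  fixes c :: "'a::semiring"
  assumes h: "\<And>y. c * y = y * c"
  shows "a * (X * (c * G)) = c * (a * (X * G))"
proof -
  have "a * (X * (c * G)) = a * ((X * c) * G)" by (simp only: mult.assoc)
  also have "\<dots> = a * ((c * X) * G)" by (simp only: h)
  also have "\<dots> = (a * c) * (X * G)" by (simp only: mult.assoc)
  also have "\<dots> = (c * a) * (X * G)" by (simp only: h)
  also have "\<dots> = c * (a * (X * G))" by (simp only: mult.assoc)
  finally show ?thesis .
qed

lemma Gq_cong:
  assumes "\<forall>t\<in>{1..p}. r t = r' t" "\<forall>t\<in>{1..p}. c t = c' t"
  shows "Gq q x r c p = Gq q x r' c' p"
  unfolding Gq_def
proof (rule sum.cong[OF refl])
  fix \<sigma> assume "\<sigma> \<in> {\<sigma>. \<sigma> permutes {1..p}}"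
  then have s: "\<sigma> permutes {1..p}" by simp
  have "map (\<lambda>t. x (r t) (c (\<sigma> t))) [1..<p+1] = map (\<lambda>t. x (r' t) (c' (\<sigma> t))) [1..<p+1]"
  proof (rule map_cong[OF refl])
    fix t assume "t \<in> set [1..<p+1]"
    then have t: "t \<in> {1..p}" by auto
    then have "\<sigma> t \<in> {1..p}" using permutes_in_image[OF s] by simp
    then show "x (r t) (c (\<sigma> t)) = x (r' t) (c' (\<sigma> t))" using assms t by simp
  qed
  then show "inverse ((- q) ^ inversions \<sigma> p) * prod_list (map (\<lambda>t. x (r t) (c (\<sigma> t))) [1..<p+1]) =
    inverse ((- q) ^ inversions \<sigma> p) * prod_list (map (\<lambda>t. x (r' t) (c' (\<sigma> t))) [1..<p+1])" by (simp only:)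
qed

lemma swap_lemma:
  fixes q :: "'a::division_ring"
  assumes gen: "q_generic q n m x" and cq: "\<forall>y. q * y = y * q" and q0: "q \<noteq> 0"
  shows "1 \<le> t \<Longrightarrow> Suc t \<le> p \<Longrightarrow> okr n r p \<Longrightarrow> okc m c p \<Longrightarrow>
    (r t = r (Suc t) \<longrightarrow> Gq q x r c p = 0) \<and>
    (r t < r (Suc t) \<longrightarrow> Gq q x (sw t r) c p = - inverse q * Gq q x r c p)"
proof (induction t arbitrary: r c p)
  case 0 then show ?case by simp
next
  case (Suc t)
  show ?case
  proof (cases "t = 0")
    case True
    obtain p' where p: "p = Suc (Suc p')" using Suc.prems True by (cases p; cases "p - 1") auto
    let ?E = "\<lambda>u v. inverse ((-q) ^ ((u-1) + (v-2)))"
    let ?G = "\<lambda>u v. Gq q x (\<lambda>t. r (Suc (Suc t))) (\<lambda>t. c (skp u (skp (v-1) t))) p'"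
    have cuv: "c u \<in> {1..m} \<and> c v \<in> {1..m} \<and> c u < c v"
      if "u \<in> {1..Suc (Suc p')}" "v \<in> {Suc u..Suc (Suc p')}" for u v
      using Suc.prems(4) that unfolding okc_def p by auto
    have r12: "r 1 \<in> {1..n}" "r 2 \<in> {1..n}" using Suc.prems(3) unfolding okr_def p by auto
    have part1: "r 1 = r 2 \<longrightarrow> Gq q x r c p = 0"
    proof
      assume e: "r 1 = r 2"
      show "Gq q x r c p = 0" unfolding p laplace2[OF cq q0]
        by (rule sum.neutral, rule ballI, rule sum.neutral, rule ballI)
           (use M_same[OF gen q0] cuv r12 e in simp)
    qed
    have part2: "r 1 < r 2 \<longrightarrow> Gq q x (sw 1 r) c p = - inverse q * Gq q x r c p"
    proof
      assume lt: "r 1 < r 2"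
      have iC: "(- inverse q) * y = y * (- inverse q)" for y
        using central_inv[of q y] cq by simp
      have "Gq q x (sw 1 r) c p = (\<Sum>u=1..Suc (Suc p'). \<Sum>v\<in>{Suc u..Suc (Suc p')}.
          ?E u v * ((x (r 2) (c u) * x (r 1) (c v) - inverse q * (x (r 2) (c v) * x (r 1) (c u))) * ?G u v))"
      proof -
        have gs: "Gq q x (\<lambda>t. sw 1 r (Suc (Suc t))) C p' = Gq q x (\<lambda>t. r (Suc (Suc t))) C p'" for C
          by (rule Gq_cong) (auto simp: sw_def)
        show ?thesis unfolding p laplace2[OF cq q0] gs by (simp add: sw_def numeral_2_eq_2)
      qed
      also have "\<dots> = (\<Sum>u=1..Suc (Suc p'). \<Sum>v\<in>{Suc u..Suc (Suc p')}.
          - inverse q * (?E u v * ((x (r 1) (c u) * x (r 2) (c v) - inverse q * (x (r 1) (c v) * x (r 2) (c u))) * ?G u v)))"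
      proof (rule sum.cong[OF refl], rule sum.cong[OF refl])
        fix u v assume "u \<in> {1..Suc (Suc p')}" "v \<in> {Suc u..Suc (Suc p')}"
        then have cc: "c u \<in> {1..m}" "c v \<in> {1..m}" "c u < c v" using cuv by auto
        show "?E u v * ((x (r 2) (c u) * x (r 1) (c v) - inverse q * (x (r 2) (c v) * x (r 1) (c u))) * ?G u v) =
          - inverse q * (?E u v * ((x (r 1) (c u) * x (r 2) (c v) - inverse q * (x (r 1) (c v) * x (r 2) (c u))) * ?G u v))"
          unfolding M_swap[OF gen q0 r12 lt cc]
          by (simp only: mult.assoc[symmetric] iC[of "?E u v"])
      qed
      also have "\<dots> = - inverse q * Gq q x r c p"
        unfolding p laplace2[OF cq q0] by (simp only: sum_distrib_left)
      finally show "Gq q x (sw 1 r) c p = - inverse q * Gq q x r c p" .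
    qed
    show ?thesis using part1 part2 True by (simp add: numeral_2_eq_2)
  next
    case False
    obtain p' where p: "p = Suc p'" using Suc.prems by (cases p) auto
    have IH: "(r (Suc t) = r (Suc (Suc t)) \<longrightarrow> Gq q x (\<lambda>i. r (Suc i)) (\<lambda>i. c (skp k i)) p' = 0) \<and>
       (r (Suc t) < r (Suc (Suc t)) \<longrightarrow> Gq q x (sw t (\<lambda>i. r (Suc i))) (\<lambda>i. c (skp k i)) p' =
          - inverse q * Gq q x (\<lambda>i. r (Suc i)) (\<lambda>i. c (skp k i)) p')"
      if k: "k \<in> {1..Suc p'}" for k
      using Suc.IH[of p' "\<lambda>i. r (Suc i)" "\<lambda>i. c (skp k i)"] False Suc.prems
        okr_Suc[of n r p'] okc_skp[of m c p' k] k p by auto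
    have swS: "(\<lambda>i. sw (Suc t) r (Suc i)) = sw t (\<lambda>i. r (Suc i))" by (auto simp: sw_def)
    have sw1: "sw (Suc t) r 1 = r 1" using False by (simp add: sw_def)
    have iC: "(- inverse q) * y = y * (- inverse q)" for y
      using central_inv[of q y] cq by simp
    show ?thesis
    proof (intro conjI impI)
      assume e: "r (Suc t) = r (Suc (Suc t))"
      show "Gq q x r c p = 0" unfolding p laplace[OF cq q0]
        by (rule sum.neutral) (use IH e in simp)
    next
      assume lt: "r (Suc t) < r (Suc (Suc t))"
      have "Gq q x (sw (Suc t) r) c p = (\<Sum>k=1..Suc p'. inverse ((-q) ^ (k-1)) *
            (x (r 1) (c k) * (- inverse q * Gq q x (\<lambda>i. r (Suc i)) (\<lambda>i. c (skp k i)) p')))"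
        unfolding p laplace[OF cq q0] swS sw1
        by (rule sum.cong[OF refl]) (use IH lt in simp)
      also have "\<dots> = (\<Sum>k=1..Suc p'. - inverse q * (inverse ((-q) ^ (k-1)) *
            (x (r 1) (c k) * Gq q x (\<lambda>i. r (Suc i)) (\<lambda>i. c (skp k i)) p')))"
        by (rule sum.cong[OF refl]) (rule pull_c, rule iC)
      also have "\<dots> = - inverse q * Gq q x r c p"
        unfolding p laplace[OF cq q0] by (simp only: sum_distrib_left)
      finally show "Gq q x (sw (Suc t) r) c p = - inverse q * Gq q x r c p" .
    qed
  qed
qed

lemma okr_sw: "okr n r p \<Longrightarrow> 1 \<le> t \<Longrightarrow> Suc t \<le> p \<Longrightarrow> okr n (sw t r) p"
  unfolding okr_def sw_def by auto

lemma sw_sw: "sw t (sw t r) = r"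
  by (auto simp: sw_def)

lemma zero_lemma:
  fixes q :: "'a::division_ring"
  assumes gen: "q_generic q n m x" and cq: "\<forall>y. q * y = y * q" and q0: "q \<noteq> 0"
    and oc: "okc m c p" and i1: "1 \<le> i"
  shows "okr n r p \<Longrightarrow> i < j \<Longrightarrow> j \<le> p \<Longrightarrow> r i = r j \<Longrightarrow> Gq q x r c p = 0"
proof (induction j arbitrary: r rule: less_induct)
  case (less j)
  have iq0: "- inverse q \<noteq> 0" using q0 by simp
  show ?case
  proof (cases "j = Suc i")
    case True
    then show ?thesis using swap_lemma[OF gen cq q0 i1, of p r c] less.prems oc by auto
  next
    case False
    define t where "t = j - 1"
    have t: "Suc t = j" "i < t" "1 \<le> t" "t < j" using False less.prems i1 by (auto simp: t_def)
    have SW: "(r t = r (Suc t) \<longrightarrow> Gq q x r c p = 0) \<and>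
       (r t < r (Suc t) \<longrightarrow> Gq q x (sw t r) c p = - inverse q * Gq q x r c p)"
      using swap_lemma[OF gen cq q0 t(3), of p r c] less.prems oc t by auto
    have ok': "okr n (sw t r) p" using okr_sw[OF less.prems(1) t(3)] less.prems t by auto
    have z': "Gq q x (sw t r) c p = 0"
    proof (rule less.IH[OF t(4) ok' t(2)])
      show "t \<le> p" using t less.prems by auto
      show "sw t r i = sw t r t" using t less.prems by (auto simp: sw_def)
    qed
    consider "r t = r (Suc t)" | "r t < r (Suc t)" | "r (Suc t) < r t" by linarith
    then show ?thesis
    proof cases
      case 1 then show ?thesis using SW by simp
    next
      case 2
      then have "- inverse q * Gq q x r c p = 0" using SW z' by simp
      then show ?thesis using iq0 by simp
    next
      case 3
      have "sw t r t < sw t r (Suc t)" using 3 by (simp add: sw_def)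
      then have "Gq q x (sw t (sw t r)) c p = - inverse q * Gq q x (sw t r) c p"
        using swap_lemma[OF gen cq q0 t(3), of p "sw t r" c] ok' oc less.prems t by auto
      then show ?thesis using z' sw_sw by simp
    qed
  qed
qed

lemma qd_algebra:
  fixes A N :: "nat \<Rightarrow> nat \<Rightarrow> 'a::ring_1"
  assumes fC: "finite C" and fR: "finite R"
    and inv: "\<forall>c\<in>C. \<forall>c'\<in>C. (\<Sum>r\<in>R. N c r * A r c') = (if c = c' then 1 else 0)"
    and van: "\<forall>\<rho>\<in>R. A \<rho> j * g + (\<Sum>c\<in>C. A \<rho> c * y c) = 0"
  shows "A i j * g + (\<Sum>c\<in>C. A i c * y c) = (A i j - (\<Sum>c\<in>C. \<Sum>r\<in>R. A i c * N c r * A r j)) * g"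
proof -
  have yc: "y c' = - ((\<Sum>r\<in>R. N c' r * A r j) * g)" if c': "c' \<in> C" for c'
  proof -
    have "(\<Sum>c\<in>C. (if c' = c then 1 else 0) * y c) = (\<Sum>c\<in>C. if c' = c then y c else 0)"
      by (rule sum.cong) auto
    also have "\<dots> = y c'" using c' fC by (simp add: sum.delta)
    finally have "y c' = (\<Sum>c\<in>C. (if c' = c then 1 else 0) * y c)" by simp
    also have "\<dots> = (\<Sum>c\<in>C. (\<Sum>r\<in>R. N c' r * A r c) * y c)"
      using inv c' by (intro sum.cong) auto
    also have "\<dots> = (\<Sum>c\<in>C. \<Sum>r\<in>R. N c' r * (A r c * y c))"
      by (simp add: sum_distrib_right mult.assoc)
    also have "\<dots> = (\<Sum>r\<in>R. \<Sum>c\<in>C. N c' r * (A r c * y c))"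
      by (rule sum.swap)
    also have "\<dots> = (\<Sum>r\<in>R. N c' r * (\<Sum>c\<in>C. A r c * y c))"
      by (simp add: sum_distrib_left)
    also have "\<dots> = (\<Sum>r\<in>R. N c' r * (- (A r j * g)))"
    proof (rule sum.cong[OF refl])
      fix r assume "r \<in> R"
      then have "(\<Sum>c\<in>C. A r c * y c) = - (A r j * g)" using van
        by (metis add_eq_0_iff2 add.commute)
      then show "N c' r * (\<Sum>c\<in>C. A r c * y c) = N c' r * (- (A r j * g))" by simp
    qed
    also have "\<dots> = - ((\<Sum>r\<in>R. N c' r * A r j) * g)"
      by (simp add: sum_distrib_right mult.assoc sum_negf)
    finally show ?thesis .
  qed
  have "(\<Sum>c\<in>C. A i c * y c) = (\<Sum>c\<in>C. - (A i c * ((\<Sum>r\<in>R. N c r * A r j) * g)))"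
    using yc by (intro sum.cong) auto
  also have "\<dots> = - ((\<Sum>c\<in>C. \<Sum>r\<in>R. A i c * N c r * A r j) * g)"
    by (simp add: sum_negf sum_distrib_left sum_distrib_right mult.assoc)
  finally show ?thesis by (simp add: algebra_simps)
qed

lemma key_step:
  fixes q :: "'a::division_ring"
  assumes gen: "q_generic q n m x" and cq: "\<forall>y. q * y = y * q" and q0: "q \<noteq> 0"
    and idx: "\<forall>t\<in>{1..m}. idx t \<in> {1..n}"
    and m: "m = s + Suc p"
    and dfd: "quasidet_defined {s+1..m} {s+1..m} (\<lambda>t u. x (idx t) u) (s+1) (s+1)"
  shows "Gq q x (\<lambda>t. idx (t+s)) (\<lambda>t. t+s) (Suc p) =
         quasidet {s+1..m} {s+1..m} (\<lambda>t u. x (idx t) u) (s+1) (s+1) *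
         Gq q x (\<lambda>t. idx (t + Suc s)) (\<lambda>t. t + Suc s) p"
proof -
  let ?A = "\<lambda>t u. x (idx t) u"
  define C where "C = {s+2..m}"
  have CC: "{s+1..m} - {s+1} = C" unfolding C_def by auto
  define N where "N = inv_on C C ?A"
  have "invertible_on C C ?A" using dfd unfolding quasidet_defined_def CC .
  then have isinv: "is_inverse_on C C ?A N"
    unfolding invertible_on_def N_def inv_on_def by (rule someI_ex)
  define a where "a k = inverse ((-q) ^ (k-1))" for k
  define y where "y u = a (u - s) * Gq q x (\<lambda>t. idx (Suc t + s)) (\<lambda>t. skp (u-s) t + s) p" for u
  define rr where "rr \<rho> = (\<lambda>t. if t = 1 then idx \<rho> else idx (t+s))" for \<rho>
  have aC: "a l * z = z * a l" for l z unfolding a_def by (rule central_ipow[OF cq])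
  have exp: "Gq q x (rr \<rho>) (\<lambda>t. t+s) (Suc p) = (\<Sum>u\<in>{s+1..m}. ?A \<rho> u * y u)" for \<rho>
  proof -
    have "Gq q x (rr \<rho>) (\<lambda>t. t+s) (Suc p) = (\<Sum>k=1..Suc p. a k * (x (rr \<rho> 1) (k+s) *
           Gq q x (\<lambda>t. rr \<rho> (Suc t)) (\<lambda>t. skp k t + s) p))"
      unfolding a_def by (rule laplace[OF cq q0])
    also have "\<dots> = (\<Sum>k=1..Suc p. ?A \<rho> (k+s) * y (k+s))"
    proof (rule sum.cong[OF refl])
      fix k
      have g: "Gq q x (\<lambda>t. rr \<rho> (Suc t)) (\<lambda>t. skp k t + s) p = Gq q x (\<lambda>t. idx (Suc t + s)) (\<lambda>t. skp k t + s) p"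
        by (rule Gq_cong) (auto simp: rr_def)
      show "a k * (x (rr \<rho> 1) (k+s) * Gq q x (\<lambda>t. rr \<rho> (Suc t)) (\<lambda>t. skp k t + s) p) = ?A \<rho> (k+s) * y (k+s)"
      proof -
        have "a k * (x (idx \<rho>) (k+s) * Gq q x (\<lambda>t. idx (Suc t + s)) (\<lambda>t. skp k t + s) p) =
              x (idx \<rho>) (k+s) * (a k * Gq q x (\<lambda>t. idx (Suc t + s)) (\<lambda>t. skp k t + s) p)"
          by (simp only: mult.assoc[symmetric] aC[of k "x (idx \<rho>) (k+s)"])
        then show ?thesis unfolding g y_def by (simp add: rr_def)
      qed
    qed
    also have "\<dots> = (\<Sum>u\<in>{1+s..Suc p+s}. ?A \<rho> u * y u)"
      by (rule sum.shift_bounds_cl_nat_ivl[symmetric])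
    also have "{1+s..Suc p+s} = {s+1..m}" using m by auto
    finally show ?thesis .
  qed
  have fC: "finite C" unfolding C_def by simp
  have split: "{s+1..m} = insert (s+1) C" "s+1 \<notin> C" unfolding C_def using m by auto
  define g where "g = Gq q x (\<lambda>t. idx (t + Suc s)) (\<lambda>t. t + Suc s) p"
  have y1: "y (s+1) = g" unfolding y_def g_def a_def
    by (simp, rule Gq_cong) (auto simp: skp_def)
  have S: "(\<Sum>u\<in>{s+1..m}. ?A \<rho> u * y u) = ?A \<rho> (s+1) * g + (\<Sum>c\<in>C. ?A \<rho> c * y c)" for \<rho>
    unfolding split(1) using split(2) fC y1 by (simp add: sum.insert)
  have okc: "okc m (\<lambda>t. t+s) (Suc p)" unfolding okc_def using m by auto
  have van: "\<forall>\<rho>\<in>C. ?A \<rho> (s+1) * g + (\<Sum>c\<in>C. ?A \<rho> c * y c) = 0"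
  proof
    fix \<rho> assume r: "\<rho> \<in> C"
    have okr: "okr n (rr \<rho>) (Suc p)" unfolding okr_def rr_def using idx r m by (auto simp: C_def)
    have "Gq q x (rr \<rho>) (\<lambda>t. t+s) (Suc p) = 0"
    proof (rule zero_lemma[OF gen cq q0 okc _ okr])
      show "1 < \<rho> - s" "\<rho> - s \<le> Suc p" using r m by (auto simp: C_def)
      show "rr \<rho> 1 = rr \<rho> (\<rho> - s)" using r by (auto simp: C_def rr_def)
    qed simp
    then show "?A \<rho> (s+1) * g + (\<Sum>c\<in>C. ?A \<rho> c * y c) = 0" using exp S by simp
  qed
  have LHS: "Gq q x (\<lambda>t. idx (t+s)) (\<lambda>t. t+s) (Suc p) = Gq q x (rr (s+1)) (\<lambda>t. t+s) (Suc p)"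
    by (rule Gq_cong) (auto simp: rr_def)
  have inv: "\<forall>c\<in>C. \<forall>c'\<in>C. (\<Sum>r\<in>C. N c r * ?A r c') = (if c = c' then 1 else 0)"
    using isinv unfolding is_inverse_on_def by blast
  have "Gq q x (\<lambda>t. idx (t+s)) (\<lambda>t. t+s) (Suc p) = ?A (s+1) (s+1) * g + (\<Sum>c\<in>C. ?A (s+1) c * y c)"
    unfolding LHS exp S ..
  also have "\<dots> = (?A (s+1) (s+1) - (\<Sum>c\<in>C. \<Sum>r\<in>C. ?A (s+1) c * N c r * ?A r (s+1))) * g"
    by (rule qd_algebra[OF fC fC inv van])
  also have "\<dots> = quasidet {s+1..m} {s+1..m} ?A (s+1) (s+1) * g"
    unfolding quasidet_def CC N_def ..
  finally show ?thesis unfolding g_def .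
qed

theorem mainTheorem6:
  fixes q :: "'a::{division_ring, ring_char_0}"
    and x :: "nat \<Rightarrow> nat \<Rightarrow> 'a" and n m :: nat and idx :: "nat \<Rightarrow> nat"
  assumes q_central: "\<forall>y. q * y = y * q"
    and q_nz: "q \<noteq> 0"
    and q_not_root: "\<forall>k>0. q ^ k \<noteq> 1"
    and gen: "q_generic q n m x"
    and mn: "m \<le> n"
    and idx: "\<forall>t\<in>{1..m}. idx t \<in> {1..n}"
    and defd: "\<forall>k<m. quasidet_defined {k+1..m} {k+1..m} (\<lambda>t s. x (idx t) s) (k+1) (k+1)"
  shows "qdet_q q m (\<lambda>t s. x (idx t) s) =
         prod_list (map (\<lambda>k. quasidet {k+1..m} {k+1..m} (\<lambda>t s. x (idx t) s) (k+1) (k+1)) [0..<m])"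
proof -
  have claim: "\<forall>s. m - s = d \<longrightarrow> s \<le> m \<longrightarrow> Gq q x (\<lambda>t. idx (t+s)) (\<lambda>t. t+s) (m-s) =
     prod_list (map (\<lambda>k. quasidet {k+1..m} {k+1..m} (\<lambda>t s. x (idx t) s) (k+1) (k+1)) [s..<m])" for d
  proof (induction d)
    case 0
    then show ?case by (simp add: Gq_0)
  next
    case (Suc d)
    show ?case
    proof (intro allI impI)
      fix s assume d: "m - s = Suc d" and sm: "s \<le> m"
      have m: "m = s + Suc d" and slt: "s < m" using d by auto
      have IH: "Gq q x (\<lambda>t. idx (t + Suc s)) (\<lambda>t. t + Suc s) d =
        prod_list (map (\<lambda>k. quasidet {k+1..m} {k+1..m} (\<lambda>t s. x (idx t) s) (k+1) (k+1)) [Suc s..<m])"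
        using Suc.IH[rule_format, of "Suc s"] d by auto
      have "Gq q x (\<lambda>t. idx (t+s)) (\<lambda>t. t+s) (m-s) =
         quasidet {s+1..m} {s+1..m} (\<lambda>t u. x (idx t) u) (s+1) (s+1) *
         Gq q x (\<lambda>t. idx (t + Suc s)) (\<lambda>t. t + Suc s) d"
        unfolding d using key_step[OF gen q_central q_nz idx m] defd slt by auto
      also have "\<dots> = prod_list (map (\<lambda>k. quasidet {k+1..m} {k+1..m} (\<lambda>t s. x (idx t) s) (k+1) (k+1)) [s..<m])"
        unfolding IH using upt_conv_Cons[OF slt] by simp
      finally show "Gq q x (\<lambda>t. idx (t+s)) (\<lambda>t. t+s) (m-s) =
         prod_list (map (\<lambda>k. quasidet {k+1..m} {k+1..m} (\<lambda>t s. x (idx t) s) (k+1) (k+1)) [s..<m])" .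
    qed
  qed
  have "qdet_q q m (\<lambda>t s. x (idx t) s) = Gq q x (\<lambda>t. idx (t+0)) (\<lambda>t. t+0) (m-0)"
    by (simp add: qdet_q_def Gq_def)
  also have "\<dots> = prod_list (map (\<lambda>k. quasidet {k+1..m} {k+1..m} (\<lambda>t s. x (idx t) s) (k+1) (k+1)) [0..<m])"
    using claim[of "m - 0", rule_format, of 0] by simp
  finally show ?thesis .
qed

end
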